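(* Let $p$ be a positive multiple of $4$ and let $q \ge 8$ be a power of two. Let $k = pq/2$. Then there exists a perfect coloring of the $p \times q$ toroidal grid with the color set $\{0,1,\ldots,k-1\}$, i.e. a coloring in which every color appears exactly twice and, for every color $c$, the $8$ neighbors of $c$ (four neighbors at each of its two occurrences) are pairwise distinct colors.
   Context: Rows of the $p\times q$ grid are indexed $0,\ldots,p-1$ and columns $0,\ldots,q-1$. The grid is treated as toroidal: the north, south, west and east neighbors of position $(x,y)$ are the positions $(x-1 \bmod p, y)$, $(x+1 \bmod p, y)$, $(x, y-1 \bmod q)$, $(x, y+1 \bmod q)$. A coloring assigns a color to each grid position. If every color appears exactly $f$ times, then each color $c$ has $4f$ neighbors in total, namely the colors at the four neighboring positions of each of the $f$ positions colored $c$ (counted as a list of $4f$ entries). The coloring is called perfect if every color appears the same number $f$ of times and, for every color $c$, these $4f$ neighbor colors are pairwise distinct. *)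

theory Defs
  imports Main "HOL-Library.Product_Lexorder"
begin

definition grid :: "nat \<Rightarrow> nat \<Rightarrow> (nat \<times> nat) set" where
  "grid p q = {0..<p} \<times> {0..<q}"

definition torus_nbrs :: "nat \<Rightarrow> nat \<Rightarrow> nat \<times> nat \<Rightarrow> (nat \<times> nat) list" where
  "torus_nbrs p q v = (case v of (x, y) \<Rightarrow>
     [((x + p - 1) mod p, y), ((x + 1) mod p, y), (x, (y + q - 1) mod q), (x, (y + 1) mod q)])"

definition positions :: "nat \<Rightarrow> nat \<Rightarrow> (nat \<times> nat \<Rightarrow> 'c) \<Rightarrow> 'c \<Rightarrow> (nat \<times> nat) set" where
  "positions p q col c = {v \<in> grid p q. col v = c}"

definition nbr_colors :: "nat \<Rightarrow> nat \<Rightarrow> (nat \<times> nat \<Rightarrow> 'c) \<Rightarrow> 'c \<Rightarrow> 'c list" where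
  "nbr_colors p q col c =
     concat (map (\<lambda>v. map col (torus_nbrs p q v)) (sorted_list_of_set (positions p q col c)))"

definition perfect_coloring :: "nat \<Rightarrow> nat \<Rightarrow> 'c set \<Rightarrow> (nat \<times> nat \<Rightarrow> 'c) \<Rightarrow> bool" where
  "perfect_coloring p q C col \<longleftrightarrow>
     col ` grid p q \<subseteq> C \<and>
     (\<exists>f. \<forall>c\<in>C. card (positions p q col c) = f) \<and>
     (\<forall>c\<in>C. distinct (nbr_colors p q col c))"

end

theory Submission
  imports Defs
begin

definition tbl :: "nat list list" where
 "tbl = [[3, 5, 0, 13, 9, 14, 10, 6],[8, 6, 2, 14, 1, 5, 15, 4],[2, 11, 12, 7, 4, 10, 7, 9],[1, 8, 15, 11, 0, 3, 13, 12]]"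

definition Bc :: "nat \<times> nat \<Rightarrow> nat" where
 "Bc v = tbl ! (fst v mod 4) ! (snd v mod 8)"

lemma grid48: "grid 4 8 = set (List.product [0..<4] [0..<8])"
  by (auto simp: grid_def)

lemma Bc_lt: "Bc v < 16"
proof -
  have "\<forall>a\<in>set [0..<4]. \<forall>b\<in>set [0..<8]. tbl ! a ! b < 16" by (simp add: tbl_def upt_rec)
  then show ?thesis unfolding Bc_def by simp
qed

lemma base: "\<forall>c\<in>set [0..<16]. card (positions 4 8 Bc c) = 2 \<and> distinct (nbr_colors 4 8 Bc c)"
  unfolding positions_def nbr_colors_def grid48 set_filter[symmetric] sorted_list_of_set_sort_remdups
  by (simp add: Bc_def tbl_def torus_nbrs_def upt_rec)

definition colL :: "nat \<Rightarrow> nat \<times> nat \<Rightarrow> nat" where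
  "colL Q v = Bc v + 16 * ((fst v div 4) * Q + snd v div 8)"

lemma aux16: "(a::nat) < 16 \<Longrightarrow> (a + 16 * k) mod 16 = a \<and> (a + 16 * k) div 16 = k"
  by simp

lemma colL_mod: "colL Q v mod 16 = Bc v"
  unfolding colL_def using aux16[OF Bc_lt[of v]] by blast

lemma colL_div: "colL Q v div 16 = (fst v div 4) * Q + snd v div 8"
  unfolding colL_def using aux16[OF Bc_lt[of v]] by blast

lemma Bc_mod: "Bc (a mod 4, b mod 8) = Bc (a, b)"
  by (simp add: Bc_def)

lemma divmod_unique:
  fixes Q :: nat
  assumes "b1 < Q" "b2 < Q" "a1 * Q + b1 = a2 * Q + b2"
  shows "a1 = a2 \<and> b1 = b2"
proof -
  have "a1 = (a1 * Q + b1) div Q" using assms(1) by simp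
  also have "\<dots> = (a2 * Q + b2) div Q" using assms(3) by simp
  also have "\<dots> = a2" using assms(2) by simp
  finally have 1: "a1 = a2" .
  have "b1 = (a1 * Q + b1) mod Q" using assms(1) by simp
  also have "\<dots> = (a2 * Q + b2) mod Q" using assms(3) by simp
  also have "\<dots> = b2" using assms(2) by simp
  finally show ?thesis using 1 by simp
qed

lemma positions_lift:
  fixes P Q c :: nat
  assumes p: "p = 4 * P" and q: "q = 8 * Q" and c: "c < 16 * P * Q"
  defines "i \<equiv> c div 16 div Q" and "j \<equiv> c div 16 mod Q"
  shows "positions p q (colL Q) c =
         (\<lambda>v. (4 * i + fst v, 8 * j + snd v)) ` positions 4 8 Bc (c mod 16)"
proof -
  have Qpos: "Q > 0" using c by (cases "Q = 0") auto
  have "c < P * Q * 16" using c by (simp add: mult_ac)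
  then have cdiv: "c div 16 < P * Q" by (simp add: div_less_iff_less_mult)
  have iP: "i < P" unfolding i_def using cdiv Qpos by (simp add: div_less_iff_less_mult)
  have jQ: "j < Q" unfolding j_def using Qpos by simp
  have cij: "c div 16 = i * Q + j" unfolding i_def j_def by simp
  show ?thesis
  proof (rule set_eqI, rule iffI)
    fix v assume "v \<in> positions p q (colL Q) c"
    then obtain x y where v: "v = (x, y)" "x < p" "y < q" "colL Q (x, y) = c"
      by (auto simp: positions_def grid_def)
    have m: "Bc (x mod 4, y mod 8) = c mod 16" using colL_mod[of Q "(x,y)"] v Bc_mod by simp
    have d: "(x div 4) * Q + y div 8 = i * Q + j" using colL_div[of Q "(x,y)"] v cij by simp
    have "y div 8 < Q" using v q by auto
    then have "x div 4 = i \<and> y div 8 = j" using divmod_unique[OF _ jQ d] by blast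
    then have "v = (4 * i + x mod 4, 8 * j + y mod 8)" using v by auto
    moreover have "(x mod 4, y mod 8) \<in> positions 4 8 Bc (c mod 16)"
      using m by (simp add: positions_def grid_def)
    ultimately show "v \<in> (\<lambda>v. (4 * i + fst v, 8 * j + snd v)) ` positions 4 8 Bc (c mod 16)"
      by force
  next
    fix v assume "v \<in> (\<lambda>v. (4 * i + fst v, 8 * j + snd v)) ` positions 4 8 Bc (c mod 16)"
    then obtain a b where v: "v = (4 * i + a, 8 * j + b)" "a < 4" "b < 8" "Bc (a, b) = c mod 16"
      by (auto simp: positions_def grid_def)
    have "4 * i + a < p"
    proof -
      have "i + 1 \<le> P" using iP by simp
      then have "4 * (i + 1) \<le> 4 * P" by simp
      then show ?thesis using v p by simp
    qed
    moreover have "8 * j + b < q"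
    proof -
      have "j + 1 \<le> Q" using jQ by simp
      then have "8 * (j + 1) \<le> 8 * Q" by simp
      then show ?thesis using v q by simp
    qed
    moreover have "colL Q v = c"
    proof -
      have "Bc v = c mod 16" using v Bc_mod[of "4 * i + a" "8 * j + b"] by simp
      moreover have "(4 * i + a) div 4 = i" "(8 * j + b) div 8 = j" using v by auto
      ultimately have "colL Q v = c mod 16 + 16 * (c div 16)" using cij v by (simp add: colL_def)
      then show ?thesis by simp
    qed
    ultimately show "v \<in> positions p q (colL Q) c" using v by (simp add: positions_def grid_def)
  qed
qed

lemma sorted_shift:
  fixes S :: "(nat \<times> nat) set"
  assumes "finite S"
  shows "sorted_list_of_set ((\<lambda>v. (a + fst v, b + snd v)) ` S) =
         map (\<lambda>v. (a + fst v, b + snd v)) (sorted_list_of_set S)"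
proof -
  let ?sh = "\<lambda>v::nat \<times> nat. (a + fst v, b + snd v)"
  have inj: "inj ?sh" by (auto simp: inj_def)
  have mono: "\<And>u v. u < v \<Longrightarrow> ?sh u < ?sh v"
    by (auto simp: less_prod_def)
  have "sorted_wrt (<) (sorted_list_of_set S)"
    by (metis strict_sorted_list_of_set map_ident subset_UNIV)
  then have "sorted_wrt (<) (map ?sh (sorted_list_of_set S))"
    unfolding sorted_wrt_map by (rule sorted_wrt_mono_rel[rotated]) (rule mono)
  moreover have "set (map ?sh (sorted_list_of_set S)) = ?sh ` S" using assms by simp
  moreover have "length (map ?sh (sorted_list_of_set S)) = card (?sh ` S)"
    using assms card_image[OF inj_on_subset[OF inj subset_UNIV], of S] by simp
  ultimately show ?thesis
    using assms by (subst sorted_list_of_set_unique[symmetric]) auto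
qed

lemma Bc_eqI: "fst u mod 4 = fst w mod 4 \<Longrightarrow> snd u mod 8 = snd w mod 8 \<Longrightarrow> Bc u = Bc w"
  by (simp add: Bc_def)

lemma nbr_lift:
  fixes P Q :: nat
  assumes p: "p = 4 * P" and q: "q = 8 * Q" and P: "P > 0" and Q: "Q > 0"
    and a: "a < 4" and b: "b < 8"
  shows "map (\<lambda>k. k mod 16) (map (colL Q) (torus_nbrs p q (4 * i + a, 8 * j + b)))
         = map Bc (torus_nbrs 4 8 (a, b))"
proof -
  have d4: "4 dvd p" and d8: "8 dvd q" using p q by auto
  obtain P0 where P0: "P = Suc P0" using P by (cases P) auto
  obtain Q0 where Q0: "Q = Suc Q0" using Q by (cases Q) auto
  have e1: "4 * i + a + p - 1 = (a + 3) + 4 * (i + P0)" using p P0 by simp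
  have e3: "8 * j + b + q - 1 = (b + 7) + 8 * (j + Q0)" using q Q0 by simp
  have h1: "((4 * i + a + p - 1) mod p) mod 4 = (a + 4 - 1) mod 4"
    unfolding mod_mod_cancel[OF d4] e1 mod_mult_self2 by (simp add: add.commute)
  have h2: "((4 * i + a + 1) mod p) mod 4 = (a + 1) mod 4"
    unfolding mod_mod_cancel[OF d4] by (simp add: add.commute[of "4*i"] add.assoc)
  have h3: "((8 * j + b + q - 1) mod q) mod 8 = (b + 8 - 1) mod 8"
    unfolding mod_mod_cancel[OF d8] e3 mod_mult_self2 by (simp add: add.commute)
  have h4: "((8 * j + b + 1) mod q) mod 8 = (b + 1) mod 8"
    unfolding mod_mod_cancel[OF d8] by (simp add: add.commute[of "8*j"] add.assoc)
  have h5: "(4 * i + a) mod 4 = a mod 4" "(8 * j + b) mod 8 = b mod 8" by simp_all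
  show ?thesis
    unfolding torus_nbrs_def
    apply (simp only: list.map prod.case map_map o_def colL_mod)
    apply (intro conjI list.inject[THEN iffD2] refl Bc_eqI)
    apply (simp_all only: fst_conv snd_conv h1 h2 h3 h4 h5 mod_mod_trivial)
    done
qed


lemma finite_positions: "finite (positions p q col c)"
  unfolding positions_def grid_def by (rule finite_subset[of _ "{0..<p} \<times> {0..<q}"]) auto

lemma lift_color:
  fixes P Q c :: nat
  assumes p: "p = 4 * P" and q: "q = 8 * Q" and P: "P > 0" and Q: "Q > 0" and c: "c < 16 * P * Q"
  shows "card (positions p q (colL Q) c) = 2 \<and> distinct (nbr_colors p q (colL Q) c)"
proof -
  define i where "i = c div 16 div Q"
  define j where "j = c div 16 mod Q"
  define S where "S = positions 4 8 Bc (c mod 16)"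
  let ?sh = "\<lambda>v::nat \<times> nat. (4 * i + fst v, 8 * j + snd v)"
  have T: "positions p q (colL Q) c = ?sh ` S"
    unfolding S_def i_def j_def using positions_lift[OF p q c] .
  have "c mod 16 \<in> set [0..<16]" by simp
  then have bS: "card S = 2" "distinct (nbr_colors 4 8 Bc (c mod 16))"
    using base unfolding S_def by blast+
  have fS: "finite S" unfolding S_def by (rule finite_positions)
  have inj: "inj ?sh" by (auto simp: inj_def)
  have card: "card (positions p q (colL Q) c) = 2"
    using T bS card_image[OF inj_on_subset[OF inj subset_UNIV], of S] by simp
  have srt: "sorted_list_of_set (positions p q (colL Q) c) = map ?sh (sorted_list_of_set S)"
    unfolding T by (rule sorted_shift[OF fS])
  have Sg: "\<And>v. v \<in> S \<Longrightarrow> fst v < 4 \<and> snd v < 8"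
    unfolding S_def positions_def grid_def by auto
  have "map (\<lambda>k. k mod 16) (nbr_colors p q (colL Q) c) = nbr_colors 4 8 Bc (c mod 16)"
  proof -
    have "map (\<lambda>k. k mod 16) (nbr_colors p q (colL Q) c)
        = concat (map (\<lambda>v. map (\<lambda>k. k mod 16) (map (colL Q) (torus_nbrs p q (?sh v))))
                    (sorted_list_of_set S))"
      unfolding nbr_colors_def srt by (simp add: map_concat o_def)
    also have "\<dots> = concat (map (\<lambda>v. map Bc (torus_nbrs 4 8 v)) (sorted_list_of_set S))"
    proof (rule arg_cong[where f = concat], rule map_cong[OF refl])
      fix v assume "v \<in> set (sorted_list_of_set S)"
      then have "v \<in> S" using fS by simp
      then have "fst v < 4" "snd v < 8" using Sg by auto
      then show "map (\<lambda>k. k mod 16) (map (colL Q) (torus_nbrs p q (?sh v))) = map Bc (torus_nbrs 4 8 v)"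
        using nbr_lift[OF p q P Q, of "fst v" "snd v" i j] by simp
    qed
    also have "\<dots> = nbr_colors 4 8 Bc (c mod 16)"
      unfolding nbr_colors_def S_def ..
    finally show ?thesis .
  qed
  then have "distinct (nbr_colors p q (colL Q) c)"
    using bS(2) distinct_map by metis
  with card show ?thesis by blast
qed

lemma colL_range:
  fixes P Q :: nat
  assumes p: "p = 4 * P" and q: "q = 8 * Q"
  shows "colL Q ` grid p q \<subseteq> {0..<16 * P * Q}"
proof
  fix w assume "w \<in> colL Q ` grid p q"
  then obtain x y where w: "w = colL Q (x, y)" "x < p" "y < q" by (auto simp: grid_def)
  have xi: "x div 4 + 1 \<le> P" using w p by auto
  have yj: "y div 8 < Q" using w q by auto
  have "(x div 4) * Q + y div 8 < (x div 4) * Q + Q" using yj by simp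
  also have "\<dots> = (x div 4 + 1) * Q" by simp
  also have "\<dots> \<le> P * Q" using xi by (rule mult_right_mono) simp
  finally have k: "(x div 4) * Q + y div 8 + 1 \<le> P * Q" by simp
  have "w < 16 + 16 * ((x div 4) * Q + y div 8)" using w Bc_lt[of "(x,y)"] by (simp add: colL_def)
  also have "\<dots> = 16 * ((x div 4) * Q + y div 8 + 1)" by simp
  also have "\<dots> \<le> 16 * (P * Q)" using k by simp
  finally show "w \<in> {0..<16 * P * Q}" by (simp add: mult.assoc)
qed

theorem lemma1:
  fixes p q :: nat
  assumes "p > 0" and "4 dvd p"
    and "q \<ge> 8" and "\<exists>m. q = 2 ^ m"
  shows "\<exists>col :: nat \<times> nat \<Rightarrow> nat.
           perfect_coloring p q {0..<p * q div 2} col \<and>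
           (\<forall>c\<in>{0..<p * q div 2}. card (positions p q col c) = 2)"
proof -
  obtain P where p: "p = 4 * P" using assms(2) by (auto elim: dvdE)
  have P: "P > 0" using assms(1) p by simp
  obtain m where m: "q = 2 ^ m" using assms(4) by blast
  have "m \<ge> 3"
  proof (rule ccontr)
    assume "\<not> 3 \<le> m"
    then have "m \<le> 2" by simp
    then have "(2::nat) ^ m \<le> 2 ^ 2" by (rule power_increasing) simp
    then show False using assms(3) m by simp
  qed
  define Q where "Q = (2::nat) ^ (m - 3)"
  have q: "q = 8 * Q"
  proof -
    have "(2::nat) ^ m = 2 ^ (3 + (m - 3))" using \<open>m \<ge> 3\<close> by simp
    then show ?thesis unfolding Q_def m by (simp add: power_add)
  qed
  have Q: "Q > 0" unfolding Q_def by simp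
  have pq: "p * q div 2 = 16 * P * Q" unfolding p q by simp
  have all: "\<forall>c\<in>{0..<p * q div 2}. card (positions p q (colL Q) c) = 2 \<and> distinct (nbr_colors p q (colL Q) c)"
    unfolding pq using lift_color[OF p q P Q] by auto
  have "perfect_coloring p q {0..<p * q div 2} (colL Q)"
    unfolding perfect_coloring_def pq
    using colL_range[OF p q] all[unfolded pq] by blast
  then show ?thesis using all by blast
qed

end
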